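(* For every $m\ge0$ and $n\ge1$ there is an injective map from $Q_4(m,n)$ to $P_4(-m,n)$.
   Context: Partitions: $\lambda_1\ge\cdots\ge\lambda_\ell>0$, $\ell(\lambda)=\ell$, $\lambda_i=0$ for $i>\ell$, $s(\lambda)$ the smallest part with $s(\emptyset)=+\infty$. Rank $=\lambda_1-\ell$; rank-set $=[-\lambda_1,1-\lambda_2,\dots,\ell-1-\lambda_\ell,\ell,\ell+1,\dots]$. $Q(m,n)$: partitions of $n$ whose rank-set contains $m$; $P(-m,n)$: partitions of $n$ with rank $\ge-m$. $m$-Durfee rectangle symbol $(\alpha,\beta)_{(m+j)\times j}$ of $\lambda$: $j\ge0$ is the largest integer with $\lambda_{m+j}\ge j$; $\alpha$ is the conjugate of $(\lambda_1-j,\dots,\lambda_{m+j}-j)$ and $\beta=(\lambda_{m+j+1},\lambda_{m+j+2},\dots)$; $|\lambda|=|\alpha|+|\beta|+j(m+j)$. $Q_4(m,n)$ is the set of $\lambda\in Q(m,n)$ whose symbol has $j\ge1$, $\ell(\beta)-\ell(\alpha)\ge1$, $\alpha_1=m+j>\alpha_2$ and $s(\beta)\ge2$. $P_4(-m,n)$ is the set of $\mu\in P(-m,n)$ whose symbol $(\gamma,\delta)_{(m+j')\times j'}$ has $j'\ge1$, $\ell(\gamma)=\ell(\delta)$, $\gamma_1=m+j'-1$, $\delta_1=j'$, and $\delta$ has a part equal to $2$. *)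

theory Defs
  imports Main
begin

definition is_partition :: "nat list \<Rightarrow> bool" where
  "is_partition xs \<longleftrightarrow> sorted_wrt (\<ge>) xs \<and> (\<forall>x\<in>set xs. 0 < x)"

definition partitions_of :: "nat \<Rightarrow> nat list set" where
  "partitions_of n = {xs. is_partition xs \<and> sum_list xs = n}"

text \<open>The i-th part (1-based), with lambda_i = 0 for i > length.\<close>
definition part :: "nat list \<Rightarrow> nat \<Rightarrow> nat" where
  "part xs i = (if 1 \<le> i \<and> i \<le> length xs then xs ! (i - 1) else 0)"

definition rank :: "nat list \<Rightarrow> int" where
  "rank xs = int (part xs 1) - int (length xs)"

text \<open>Membership in the rank-set
  [-lambda_1, 1-lambda_2, ..., l-1-lambda_l, l, l+1, ...].\<close>
definition in_rank_set :: "int \<Rightarrow> nat list \<Rightarrow> bool" where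
  "in_rank_set k xs \<longleftrightarrow>
     (\<exists>i\<in>{1..length xs}. k = int (i - 1) - int (part xs i)) \<or> k \<ge> int (length xs)"

definition Q :: "nat \<Rightarrow> nat \<Rightarrow> nat list set" where
  "Q m n = {xs \<in> partitions_of n. in_rank_set (int m) xs}"

definition P_neg :: "nat \<Rightarrow> nat \<Rightarrow> nat list set" where
  "P_neg m n = {xs \<in> partitions_of n. rank xs \<ge> - int m}"

text \<open>Conjugate of a (not necessarily strictly positive) weakly decreasing list.\<close>
definition conj :: "nat list \<Rightarrow> nat list" where
  "conj xs = filter (\<lambda>c. 0 < c) [length (filter (\<lambda>x. k \<le> x) xs). k \<leftarrow> [1..<sum_list xs + 1]]"

definition durfee_j :: "nat \<Rightarrow> nat list \<Rightarrow> nat" where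
  "durfee_j m xs = (GREATEST j. j = 0 \<or> part xs (m + j) \<ge> j)"

definition durfee_alpha :: "nat \<Rightarrow> nat list \<Rightarrow> nat list" where
  "durfee_alpha m xs = (let j = durfee_j m xs in
     conj (map (\<lambda>i. part xs i - j) [1..<m + j + 1]))"

definition durfee_beta :: "nat \<Rightarrow> nat list \<Rightarrow> nat list" where
  "durfee_beta m xs = drop (m + durfee_j m xs) xs"

definition Q4 :: "nat \<Rightarrow> nat \<Rightarrow> nat list set" where
  "Q4 m n = {xs \<in> Q m n.
     (let j = durfee_j m xs; a = durfee_alpha m xs; b = durfee_beta m xs in
       j \<ge> 1 \<and> int (length b) - int (length a) \<ge> 1 \<and>
       part a 1 = m + j \<and> m + j > part a 2 \<and>
       (\<forall>x\<in>set b. x \<ge> 2))}"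

definition P4 :: "nat \<Rightarrow> nat \<Rightarrow> nat list set" where
  "P4 m n = {xs \<in> P_neg m n.
     (let j = durfee_j m xs; g = durfee_alpha m xs; d = durfee_beta m xs in
       j \<ge> 1 \<and> length g = length d \<and>
       part g 1 = m + j - 1 \<and> part d 1 = j \<and> 2 \<in> set d)}"

end

theory Submission
  imports Defs
begin


definition cnt :: "nat list \<Rightarrow> nat \<Rightarrow> nat" where
  "cnt L k = length (filter (\<lambda>x. k \<le> x) L)"

fun hd0 :: "nat list \<Rightarrow> nat" where
  "hd0 [] = 0" | "hd0 (a # _) = a"

fun unc :: "nat list \<Rightarrow> nat list" where
  "unc [] = []"
| "unc (a # ws) = map Suc (unc ws) @ replicate (a - hd0 ws) 1"

lemma cnt_Cons: "cnt (x # L) k = (if k \<le> x then Suc (cnt L k) else cnt L k)"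
  by (simp add: cnt_def)

lemma cnt_append: "cnt (L @ M) k = cnt L k + cnt M k"
  by (simp add: cnt_def)

lemma cnt_map_Suc: "cnt (map Suc L) (Suc k) = cnt L k"
  by (induction L) (auto simp: cnt_def)

lemma cnt_replicate1: "cnt (replicate n (Suc 0)) k = (if k \<le> 1 then n else 0)"
  by (induction n) (auto simp: cnt_def)

lemma hd0_le: "sorted_wrt (\<ge>) (a # ws) \<Longrightarrow> hd0 ws \<le> a"
  by (cases ws) auto

lemma unc_len: "sorted_wrt (\<ge>) w \<Longrightarrow> length (unc w) = hd0 w"
proof (induction w)
  case Nil then show ?case by simp
next
  case (Cons a ws)
  have "hd0 ws \<le> a" using hd0_le[OF Cons.prems] .
  with Cons show ?case by simp
qed

lemma unc_sum: "sorted_wrt (\<ge>) w \<Longrightarrow> sum_list (unc w) = sum_list w"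
proof (induction w)
  case Nil then show ?case by simp
next
  case (Cons a ws)
  have h: "hd0 ws \<le> a" using hd0_le[OF Cons.prems] .
  have s: "sum_list (map Suc L) = sum_list L + length L" for L :: "nat list"
    by (induction L) auto
  from Cons have "sorted_wrt (\<ge>) ws" by simp
  with Cons.IH unc_len[of ws] have "sum_list (unc ws) = sum_list ws" "length (unc ws) = hd0 ws" by auto
  with h s show ?case by (simp add: sum_list_replicate)
qed

lemma unc_set: "x \<in> set (unc w) \<Longrightarrow> 1 \<le> x \<and> x \<le> length w"
proof (induction w arbitrary: x)
  case Nil then show ?case by simp
next
  case (Cons a ws)
  then show ?case by (auto split: if_splits)
qed

lemma unc_sorted: "sorted_wrt (\<ge>) (unc w)"
proof (induction w)
  case Nil then show ?case by simp
next
  case (Cons a ws)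
  have "sorted_wrt (\<ge>) (map Suc (unc ws))"
    using Cons by (simp add: sorted_wrt_map)
  moreover have "sorted_wrt (\<ge>) (replicate (a - hd0 ws) (1::nat))"
    by (simp add: sorted_wrt_iff_nth_less)
  moreover have "\<forall>x\<in>set (map Suc (unc ws)). \<forall>y\<in>set (replicate (a - hd0 ws) (1::nat)). y \<le> x"
    by auto
  ultimately show ?case by (simp add: sorted_wrt_append)
qed

lemma unc_cnt: "sorted_wrt (\<ge>) w \<Longrightarrow> 1 \<le> k \<Longrightarrow> k \<le> length w \<Longrightarrow> cnt (unc w) k = w ! (k - 1)"
proof (induction w arbitrary: k)
  case Nil then show ?case by simp
next
  case (Cons a ws)
  have h: "hd0 ws \<le> a" using hd0_le[OF Cons.prems(1)] .
  have sw: "sorted_wrt (\<ge>) ws" using Cons.prems(1) by simp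
  show ?case
  proof (cases "k = 1")
    case True
    have "cnt (map Suc (unc ws)) 1 = length (unc ws)" by (simp add: cnt_def)
    then show ?thesis using True h unc_len[OF sw] by (simp add: cnt_append cnt_replicate1)
  next
    case False
    then obtain k' where k': "k = Suc k'" "1 \<le> k'" using Cons.prems by (cases k) auto
    have "cnt (unc (a # ws)) k = cnt (unc ws) k'"
      using k' by (simp add: cnt_append cnt_replicate1 cnt_map_Suc)
    also have "\<dots> = ws ! (k' - 1)" using Cons.IH[OF sw k'(2)] Cons.prems k' by simp
    also have "\<dots> = (a # ws) ! (k - 1)" using k' by (cases k') auto
    finally show ?thesis .
  qed
qed



lemma conj_char:
  assumes "\<forall>y\<in>set ys. y \<le> M" and "M \<in> set ys \<or> M = 0"
  shows "conj ys = map (cnt ys) [1..<M+1]"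
proof -
  have Ms: "M \<le> sum_list ys" using assms(2) member_le_sum_list by auto
  have split: "[1..<sum_list ys + 1] = [1..<M+1] @ [M+1..<sum_list ys + 1]"
    using Ms upt_add_eq_append[of 1 "M+1" "sum_list ys - M"] by auto
  have pos: "\<forall>k\<in>set [1..<M+1]. 0 < cnt ys k"
  proof
    fix k assume "k \<in> set [1..<M+1]"
    then have k: "1 \<le> k" "k \<le> M" by auto
    then have "M \<in> set ys" using assms(2) by auto
    then have "M \<in> set (filter (\<lambda>x. k \<le> x) ys)" using k by auto
    then show "0 < cnt ys k" unfolding cnt_def by (metis length_pos_if_in_set)
  qed
  have zero: "\<forall>k\<in>set [M+1..<sum_list ys + 1]. cnt ys k = 0"
  proof
    fix k assume "k \<in> set [M+1..<sum_list ys + 1]"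
    then have "M < k" by auto
    then have "filter (\<lambda>x. k \<le> x) ys = []" using assms(1) by (auto simp: filter_empty_conv)
    then show "cnt ys k = 0" by (simp add: cnt_def)
  qed
  have "conj ys = filter (\<lambda>c. 0 < c) (map (cnt ys) [1..<sum_list ys + 1])"
    unfolding conj_def cnt_def by simp
  also have "\<dots> = map (cnt ys) [1..<M+1]"
    unfolding split using pos zero by (simp add: filter_empty_conv)
  finally show ?thesis .
qed

lemma part_nth: "i < length xs \<Longrightarrow> part xs (Suc i) = xs ! i"
  by (simp add: part_def)

lemma part_ge: "length xs < i \<Longrightarrow> part xs i = 0"
  by (simp add: part_def)

lemma sorted_nth_mono:
  fixes xs :: "nat list"
  assumes "sorted_wrt (\<ge>) xs" "i \<le> k" "k < length xs" shows "xs ! k \<le> xs ! i"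
proof (cases "i = k")
  case False
  then show ?thesis using assms sorted_wrt_nth_less[of "(\<ge>)" xs i k] by simp
next
  case True
  then show ?thesis by simp
qed

lemma part_mono:
  assumes "sorted_wrt (\<ge>) xs" "1 \<le> i" "i \<le> k"
  shows "part xs k \<le> part xs i"
proof (cases "k \<le> length xs")
  case True
  then have "xs ! (k-1) \<le> xs ! (i-1)" using sorted_nth_mono[OF assms(1), of "i-1" "k-1"] assms by simp
  then show ?thesis using True assms unfolding part_def by simp
next
  case False
  then show ?thesis unfolding part_def by simp
qed

lemma durfee_bound:
  assumes "j = 0 \<or> part xs (m + j) \<ge> j" shows "j \<le> length xs"
proof (cases "j = 0")
  case False
  then have "part xs (m+j) \<ge> 1" using assms by auto
  then have "m + j \<le> length xs" by (auto simp: part_def split: if_splits)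
  then show ?thesis by simp
qed simp

lemma durfee_props:
  shows "durfee_j m xs = 0 \<or> part xs (m + durfee_j m xs) \<ge> durfee_j m xs"
    and "\<not> part xs (m + Suc (durfee_j m xs)) \<ge> Suc (durfee_j m xs)"
proof -
  let ?P = "\<lambda>j. j = 0 \<or> part xs (m + j) \<ge> j"
  have b: "\<forall>y. ?P y \<longrightarrow> y \<le> length xs" using durfee_bound by blast
  show "durfee_j m xs = 0 \<or> part xs (m + durfee_j m xs) \<ge> durfee_j m xs"
    unfolding durfee_j_def using GreatestI_nat[of ?P 0 "length xs"] b by auto
  show "\<not> part xs (m + Suc (durfee_j m xs)) \<ge> Suc (durfee_j m xs)"
  proof
    assume h: "part xs (m + Suc (durfee_j m xs)) \<ge> Suc (durfee_j m xs)"
    have "Suc (durfee_j m xs) \<le> durfee_j m xs"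
      unfolding durfee_j_def using Greatest_le_nat[of ?P "Suc (durfee_j m xs)" "length xs"] b h
      by (auto simp: durfee_j_def)
    then show False by simp
  qed
qed

lemma durfee_eq:
  assumes s: "sorted_wrt (\<ge>) xs" and j: "part xs (m + j) \<ge> j" and j1: "part xs (m + j + 1) < j + 1"
  shows "durfee_j m xs = j"
  unfolding durfee_j_def
proof (rule Greatest_equality)
  show "j = 0 \<or> part xs (m + j) \<ge> j" using j by simp
next
  fix y assume y: "y = 0 \<or> part xs (m + y) \<ge> y"
  show "y \<le> j"
  proof (rule ccontr)
    assume "\<not> y \<le> j"
    then have "j + 1 \<le> y" by simp
    then have "part xs (m + y) \<le> part xs (m + j + 1)" using part_mono[OF s, of "m+j+1" "m+y"] by simp
    then show False using y j1 \<open>j + 1 \<le> y\<close> by auto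
  qed
qed



lemma cnt_full: "cnt ys k = length ys \<Longrightarrow> y \<in> set ys \<Longrightarrow> k \<le> y"
  unfolding cnt_def using length_filter_less[of y ys "\<lambda>x. k \<le> x"] by force

lemma cnt_not_full: "cnt ys k < length ys \<Longrightarrow> \<exists>y\<in>set ys. y < k"
  unfolding cnt_def by (metis filter_True length_filter_le not_le_imp_less order.strict_iff_not)

lemma map_part_take:
  assumes "N \<le> length xs"
  shows "map (\<lambda>i. part xs i - j) [1..<N+1] = map (\<lambda>x. x - j) (take N xs)"
  by (rule nth_equalityI) (use assms in \<open>auto simp: part_def simp del: upt_Suc\<close>)

lemma Q4_struct:
  assumes Q: "xs \<in> Q4 m n"
  defines "j \<equiv> durfee_j m xs"
  defines "N \<equiv> m + durfee_j m xs"
  shows "2 \<le> j \<and> N + 1 \<le> length xs \<and> xs ! (N-1) = j+1 \<and> xs ! N = j \<and>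
         (\<forall>i<N. j+1 \<le> xs!i) \<and> (\<forall>x\<in>set (drop (N+1) xs). 2 \<le> x \<and> x \<le> j) \<and>
         xs!0 - j + N + 1 \<le> length xs \<and> sorted_wrt (\<ge>) xs \<and> sum_list xs = n \<and> (\<forall>x\<in>set xs. 0<x)"
proof -
  define ys where "ys = map (\<lambda>i. part xs i - j) [1..<m + j + 1]"
  define a where "a = conj ys"
  define b where "b = drop (m + j) xs"
  have a_def': "durfee_alpha m xs = a" unfolding a_def ys_def durfee_alpha_def j_def by (simp add: Let_def del: upt_Suc)
  have b_def': "durfee_beta m xs = b" unfolding b_def durfee_beta_def j_def by simp
  from Q have raw: "is_partition xs \<and> sum_list xs = n \<and> in_rank_set (int m) xs \<and>
     durfee_j m xs \<ge> 1 \<and> int (length (durfee_beta m xs)) - int (length (durfee_alpha m xs)) \<ge> 1 \<and>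
     part (durfee_alpha m xs) 1 = m + durfee_j m xs \<and> m + durfee_j m xs > part (durfee_alpha m xs) 2 \<and>
     (\<forall>x\<in>set (durfee_beta m xs). x \<ge> 2)"
    unfolding Q4_def Q_def partitions_of_def Let_def by auto
  then have part: "is_partition xs" and sm: "sum_list xs = n" and rk: "in_rank_set (int m) xs"
    and j1: "j \<ge> 1" and lab: "int (length b) - int (length a) \<ge> 1"
    and a1: "part a 1 = m + j" and a2: "m + j > part a 2" and b2: "\<forall>x\<in>set b. x \<ge> 2"
    unfolding a_def' b_def' j_def[symmetric] by auto
  have srt: "sorted_wrt (\<ge>) xs" and pos: "\<forall>x\<in>set xs. 0<x" using part unfolding is_partition_def by auto
  have pj: "part xs (m + j) \<ge> j" using durfee_props(1)[of m xs] j1 unfolding j_def by auto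
  have Nle: "N \<le> length xs"
    using pj j1 unfolding N_def j_def[symmetric] by (auto simp: part_def split: if_splits)
  have N1: "1 \<le> N" using j1 unfolding N_def j_def by simp
  have ys_eq: "ys = map (\<lambda>x. x - j) (take N xs)"
    unfolding ys_def N_def j_def[symmetric] using map_part_take[OF Nle[unfolded N_def j_def[symmetric]]] by simp
  have lys: "length ys = N" using ys_eq Nle by simp
  define M where "M = xs!0 - j"
  have ys_le: "\<forall>y\<in>set ys. y \<le> M"
  proof
    fix y assume "y \<in> set ys"
    then obtain i where i: "i < N" "y = xs!i - j" using ys_eq Nle by (auto simp: in_set_conv_nth)
    have "xs!i \<le> xs!0" using sorted_nth_mono[OF srt, of 0 i] i Nle by simp
    then show "y \<le> M" unfolding M_def using i by simp
  qed
  have ys0: "ys ! 0 = M" unfolding M_def ys_eq using N1 Nle by simp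
  have M_in: "M \<in> set ys" using ys0 lys N1 nth_mem[of 0 ys] by simp
  have a_eq: "a = map (cnt ys) [1..<M+1]" unfolding a_def using conj_char[OF ys_le] M_in by simp
  have la: "length a = M" using a_eq by simp
  have M1: "1 \<le> M"
  proof (rule ccontr)
    assume "\<not> 1 \<le> M" then have "M = 0" by simp
    then have "a = []" using a_eq by simp
    then show False using a1 j1 by (simp add: part_def)
  qed
  have "part a 1 = cnt ys 1" using a_eq M1 by (simp add: part_def del: upt_Suc)
  then have cfull: "cnt ys 1 = length ys" using a1 lys unfolding N_def j_def by simp
  have top: "\<forall>i<N. j+1 \<le> xs!i"
  proof (intro allI impI)
    fix i assume i: "i < N"
    have "ys ! i = xs!i - j" "i < length ys" unfolding ys_eq using i Nle by auto
    then have "xs!i - j \<in> set ys" by (metis nth_mem)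
    then have "1 \<le> xs!i - j" using cnt_full[OF cfull] by blast
    then show "j+1 \<le> xs!i" by simp
  qed
  have lastN: "xs!(N-1) = j+1"
  proof -
    have ge: "j+1 \<le> xs!(N-1)" using top N1 by simp
    have le: "xs!(N-1) \<le> j+1"
    proof (cases "M \<ge> 2")
      case True
      have "part a 2 = cnt ys 2" using a_eq True by (simp add: part_def numeral_2_eq_2 del: upt_Suc)
      then have "cnt ys 2 < length ys" using a2 lys unfolding N_def j_def by simp
      then obtain y where y: "y \<in> set ys" "y < 2" using cnt_not_full by blast
      then obtain i where i: "i < N" "y = xs!i - j" using ys_eq Nle by (auto simp: in_set_conv_nth)
      have "xs!(N-1) \<le> xs!i" using sorted_nth_mono[OF srt, of i "N-1"] i Nle by simp
      then show ?thesis using y i by simp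
    next
      case False
      then have "M = 1" using M1 by simp
      have "j+1 \<le> xs!0" using top N1 by simp
      then have "xs!0 = j+1" using \<open>M = 1\<close> unfolding M_def by simp
      moreover have "xs!(N-1) \<le> xs!0" using sorted_nth_mono[OF srt, of 0 "N-1"] Nle N1 by simp
      ultimately show ?thesis by simp
    qed
    from ge le show ?thesis by simp
  qed
  have lb: "length b = length xs - N" unfolding b_def N_def j_def by simp
  have lenxs: "M + N + 1 \<le> length xs" using lab la lb Nle by linarith
  have xN_lt: "xs!N < j+1"
  proof -
    have "\<not> part xs (m + Suc j) \<ge> Suc j" using durfee_props(2)[of m xs] unfolding j_def by simp
    moreover have "part xs (m + Suc j) = xs!N" using lenxs unfolding N_def j_def[symmetric]
      by (simp add: part_def)
    ultimately show ?thesis by simp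
  qed
  have xN: "xs!N = j"
  proof -
    have "\<not> int m \<ge> int (length xs)" using lenxs unfolding N_def by simp
    then obtain i where i: "i \<in> {1..length xs}" "int m = int (i-1) - int (part xs i)"
      using rk unfolding in_rank_set_def by auto
    have pi: "part xs i = xs!(i-1)" using i(1) by (simp add: part_def)
    have eq: "xs!(i-1) + m = i - 1" using i(2) pi by linarith
    show ?thesis
    proof (cases "i \<le> N")
      case True
      then have "i - 1 < N" using i(1) by auto
      then have "j+1 \<le> xs!(i-1)" using top by blast
      then show ?thesis using eq True unfolding N_def j_def[symmetric] by linarith
    next
      case False
      then have "xs!(i-1) \<le> xs!N" using sorted_nth_mono[OF srt, of N "i-1"] i(1) by simp
      then show ?thesis using eq False xN_lt unfolding N_def j_def[symmetric] by linarith
    qed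
  qed
  have bN: "b ! 0 = j" unfolding b_def using xN lenxs unfolding N_def j_def by simp
  have "0 < length b" using lenxs lb by simp
  then have "j \<in> set b" using bN nth_mem[of 0 b] by simp
  then have j2: "2 \<le> j" using b2 by simp
  have bot: "\<forall>x\<in>set (drop (N+1) xs). 2 \<le> x \<and> x \<le> j"
  proof
    fix x assume "x \<in> set (drop (N+1) xs)"
    then obtain k where k: "k < length xs - (N+1)" "x = xs ! (N + 1 + k)" by (auto simp: in_set_conv_nth)
    have "b ! (Suc k) = x" unfolding b_def using k unfolding N_def j_def by simp
    moreover have "Suc k < length b" using k lb by simp
    ultimately have "x \<in> set b" using nth_mem by metis
    then have "2 \<le> x" using b2 by simp
    moreover have "x \<le> j" using sorted_nth_mono[OF srt, of N "N+1+k"] k xN by simp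
    ultimately show "2 \<le> x \<and> x \<le> j" by simp
  qed
  show ?thesis using j2 lenxs lastN xN top bot srt sm pos unfolding M_def by auto
qed



lemma cnt_ge1_all: "\<forall>x\<in>set R. 1 \<le> x \<Longrightarrow> cnt R 1 = length R"
  unfolding cnt_def by (simp add: filter_True)

lemma P4_intro:
  assumes j2: "2 \<le> j" and N: "N = m + j" and lR: "length R = N - 1"
    and sR: "sorted_wrt (\<ge>) R" and pR: "\<forall>x\<in>set R. 1 \<le> x"
    and sF: "sorted_wrt (\<ge>) F" and pF: "\<forall>x\<in>set F. 1 \<le> x \<and> x \<le> j"
    and two: "2 \<in> set F \<or> j = 2" and lF: "length F + 1 = hd R"
    and sm: "sum_list (map (\<lambda>x. x + j) R @ [j, j] @ F) = n"
  shows "map (\<lambda>x. x + j) R @ [j, j] @ F \<in> P4 m n"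
proof -
  define mu where "mu = map (\<lambda>x. x + j) R @ [j, j] @ F"
  have Rne: "R \<noteq> []" using lR N j2 by auto
  have lmu: "length mu = N + 1 + length F" unfolding mu_def using lR N j2 by simp
  have smu: "sorted_wrt (\<ge>) mu"
    unfolding mu_def using sR sF pR pF
    by (auto simp: sorted_wrt_append sorted_wrt_map)
  have pmu: "\<forall>x\<in>set mu. 0 < x" unfolding mu_def using pF j2 by auto
  have ispart: "is_partition mu" unfolding is_partition_def using smu pmu by simp
  have mu0: "part mu 1 = hd R + j" unfolding mu_def part_def using Rne by (cases R) auto
  have muN1: "mu ! (N-1) = j" unfolding mu_def using lR by (simp add: nth_append)
  have NR: "N = Suc (length R)" using lR N j2 by simp
  have muN: "mu ! N = j" unfolding mu_def NR by (simp add: nth_append)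
  have rank: "rank mu \<ge> - int m" unfolding rank_def mu0 using lmu lF N by simp
  have pj: "part mu (m + j) = j" using muN1 N j2 lmu by (simp add: part_def)
  have pj1: "part mu (m + j + 1) = j" using muN N j2 lmu by (simp add: part_def)
  have dj: "durfee_j m mu = j" using durfee_eq[OF smu, where m=m and j=j] pj pj1 by simp
  have tk: "take N mu = map (\<lambda>x. x + j) R @ [j]" unfolding mu_def using lR N j2
    by (simp add: take_append)
  have ys: "map (\<lambda>i. part mu i - j) [1..<m + j + 1] = R @ [0]"
    using map_part_take[of N mu j] lmu N tk by (simp add: comp_def del: upt_Suc)
  define M where "M = hd R"
  have M1: "1 \<le> M" unfolding M_def using pR Rne by simp
  have ysle: "\<forall>y\<in>set (R @ [0]). y \<le> M"
  proof
    fix y assume "y \<in> set (R @ [0])"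
    then consider "y \<in> set R" | "y = 0" by auto
    then show "y \<le> M"
    proof cases
      case 1
      then obtain i where i: "i < length R" "y = R ! i" by (auto simp: in_set_conv_nth)
      then show ?thesis using sorted_nth_mono[OF sR, of 0 i] Rne unfolding M_def by (simp add: hd_conv_nth)
    qed simp
  qed
  have Min: "M \<in> set (R @ [0])" unfolding M_def using Rne by simp
  have alpha: "durfee_alpha m mu = map (cnt (R @ [0])) [1..<M+1]"
  proof -
    have cc: "conj (R @ [0]) = map (cnt (R @ [0])) [1..<M+1]"
      using conj_char[OF ysle] Min by blast
    show ?thesis unfolding durfee_alpha_def Let_def dj ys cc ..
  qed
  have la: "length (durfee_alpha m mu) = M" using alpha by simp
  have a1: "part (durfee_alpha m mu) 1 = m + j - 1" using alpha M1 lR N cnt_ge1_all[OF pR]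
    by (simp add: part_def cnt_append cnt_def del: upt_Suc)
  have beta: "durfee_beta m mu = j # F"
  proof -
    have "durfee_beta m mu = drop N mu" unfolding durfee_beta_def dj N ..
    also have "\<dots> = j # F" unfolding mu_def NR by simp
    finally show ?thesis .
  qed
  show ?thesis
    unfolding P4_def P_neg_def partitions_of_def Let_def mu_def[symmetric]
    using ispart sm rank dj la a1 beta lF two j2 unfolding mu_def[symmetric] M_def
    by (auto simp: part_def)
qed



definition cutp :: "nat \<Rightarrow> nat list \<Rightarrow> nat list \<Rightarrow> nat" where
  "cutp j X Y = (LEAST q. 1 \<le> q \<and> (q = j - 1 \<or> Y ! q \<le> X ! (q - 1)))"

lemma cutp_props:
  assumes "2 \<le> j"
  shows "1 \<le> cutp j X Y" "cutp j X Y \<le> j - 1"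
    "cutp j X Y = j - 1 \<or> Y ! cutp j X Y \<le> X ! (cutp j X Y - 1)"
    "\<And>q. 1 \<le> q \<Longrightarrow> q < cutp j X Y \<Longrightarrow> X ! (q - 1) < Y ! q"
proof -
  let ?P = "\<lambda>q. 1 \<le> q \<and> (q = j - 1 \<or> Y ! q \<le> X ! (q - 1))"
  have Pj: "?P (j - 1)" using assms by simp
  have "?P (cutp j X Y)" unfolding cutp_def by (rule LeastI[of ?P, OF Pj])
  then show "1 \<le> cutp j X Y" "cutp j X Y = j - 1 \<or> Y ! cutp j X Y \<le> X ! (cutp j X Y - 1)" by auto
  show "cutp j X Y \<le> j - 1" unfolding cutp_def by (rule Least_le[of ?P, OF Pj])
  fix q assume q: "1 \<le> q" "q < cutp j X Y"
  have "\<not> ?P q" using q(2) unfolding cutp_def by (rule not_less_Least)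
  then show "X ! (q - 1) < Y ! q" using q assms \<open>cutp j X Y \<le> j - 1\<close> by auto
qed

lemma sorted_take_drop_app:
  fixes A B :: "nat list"
  assumes sA: "sorted_wrt (\<ge>) A" and sB: "sorted_wrt (\<ge>) B" and p1: "1 \<le> p" and pA: "p \<le> length A"
    and c: "p < length B \<Longrightarrow> B ! p \<le> A ! (p - 1)"
  shows "sorted_wrt (\<ge>) (take p A @ drop p B)"
proof -
  have "\<forall>a\<in>set (take p A). \<forall>b\<in>set (drop p B). b \<le> a"
  proof (intro ballI)
    fix a b assume a: "a \<in> set (take p A)" and b: "b \<in> set (drop p B)"
    from a obtain i where i: "i < p" "a = A ! i" using pA by (auto simp: in_set_conv_nth)
    from b obtain k where k: "k < length B - p" "b = B ! (p + k)" by (auto simp: in_set_conv_nth)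
    have "A ! (p - 1) \<le> a" using sorted_nth_mono[OF sA, of i "p-1"] i pA by simp
    moreover have "b \<le> B ! p" using sorted_nth_mono[OF sB, of p "p+k"] k by simp
    moreover have "B ! p \<le> A ! (p - 1)" using c k by simp
    ultimately show "b \<le> a" by simp
  qed
  then show ?thesis using sA sB by (simp add: sorted_wrt_append sorted_wrt_take sorted_wrt_drop)
qed

lemma sum_minus1: "\<forall>x\<in>set L. 1 \<le> x \<Longrightarrow> sum_list (map (\<lambda>z. z - 1) L) + length L = sum_list (L :: nat list)"
  by (induction L) auto

lemma two_in: "cnt L 3 < cnt L 2 \<Longrightarrow> 2 \<in> set L"
proof (induction L)
  case Nil then show ?case by (simp add: cnt_def)
next
  case (Cons a L)
  then show ?case by (cases "a = 2") (auto simp: cnt_Cons split: if_splits)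
qed

lemma core_valid:
  fixes X Y :: "nat list"
  assumes j2: "2 \<le> j" and lY: "length Y = j - 1" and lX: "j - 1 \<le> length X"
    and sX: "sorted_wrt (\<ge>) X" and sY: "sorted_wrt (\<ge>) Y"
    and pX: "\<forall>x\<in>set X. 1 \<le> x" and pY: "\<forall>y\<in>set Y. 1 \<le> y" and hXY: "X ! 0 < Y ! 0"
  defines "p \<equiv> cutp j X Y"
  defines "R \<equiv> take p Y @ drop p X"
  defines "Z \<equiv> take p X @ drop p Y"
  defines "Fs \<equiv> (hd Y - 1) # hd Z # map (\<lambda>z. z - 1) (tl Z)"
  shows "length R = length X \<and> sorted_wrt (\<ge>) R \<and> (\<forall>x\<in>set R. 1 \<le> x) \<and> hd R = hd Y \<and>
         sorted_wrt (\<ge>) Fs \<and> length Fs = j \<and> hd Fs = hd Y - 1 \<and> (3 \<le> j \<longrightarrow> Fs ! 2 < Fs ! 1) \<and>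
         1 \<le> Fs ! 1 \<and>
         sum_list R + sum_list Fs + (j - 2) = sum_list X + sum_list Y + hd Y - 1"
proof -
  have p1: "1 \<le> p" and pj: "p \<le> j - 1" using cutp_props[OF j2] unfolding p_def by auto
  have pc: "p = j - 1 \<or> Y ! p \<le> X ! (p - 1)" using cutp_props(3)[OF j2] unfolding p_def by auto
  have pm: "\<And>q. 1 \<le> q \<Longrightarrow> q < p \<Longrightarrow> X ! (q - 1) < Y ! q" using cutp_props(4)[OF j2] unfolding p_def by auto
  have Yne: "Y \<noteq> []" using lY j2 by auto
  have Xne: "X \<noteq> []" using lX j2 by auto
  have lR: "length R = length X" unfolding R_def using pj lY lX by simp
  have lZ: "length Z = j - 1" unfolding Z_def using pj lY lX by simp
  have key: "X ! (p - 1) < Y ! (p - 1)"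
  proof (cases "p = 1")
    case True then show ?thesis using hXY by simp
  next
    case False
    then have "X ! (p - 2) < Y ! (p - 1)" using pm[of "p-1"] p1 by (simp add: numeral_2_eq_2)
    moreover have "X ! (p - 1) \<le> X ! (p - 2)" using sorted_nth_mono[OF sX, of "p-2" "p-1"] pj lX j2 p1 by simp
    ultimately show ?thesis by simp
  qed
  have sR: "sorted_wrt (\<ge>) R" unfolding R_def
  proof (rule sorted_take_drop_app[OF sY sX p1])
    show "p \<le> length Y" using pj lY by simp
    assume "p < length X"
    then have "X ! p \<le> X ! (p - 1)" using sorted_nth_mono[OF sX, of "p-1" p] by simp
    then show "X ! p \<le> Y ! (p - 1)" using key by simp
  qed
  have sZ: "sorted_wrt (\<ge>) Z" unfolding Z_def
  proof (rule sorted_take_drop_app[OF sX sY p1])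
    show "p \<le> length X" using pj lX by simp
    assume "p < length Y"
    then show "Y ! p \<le> X ! (p - 1)" using pc lY by auto
  qed
  have pR: "\<forall>x\<in>set R. 1 \<le> x"
  proof
    fix x assume "x \<in> set R"
    then have "x \<in> set (take p Y) \<or> x \<in> set (drop p X)" unfolding R_def by simp
    then have "x \<in> set Y \<or> x \<in> set X" by (blast dest: in_set_takeD in_set_dropD)
    then show "1 \<le> x" using pX pY by blast
  qed
  have pZ: "\<forall>x\<in>set Z. 1 \<le> x"
  proof
    fix x assume "x \<in> set Z"
    then have "x \<in> set (take p X) \<or> x \<in> set (drop p Y)" unfolding Z_def by simp
    then have "x \<in> set Y \<or> x \<in> set X" by (blast dest: in_set_takeD in_set_dropD)
    then show "1 \<le> x" using pX pY by blast
  qed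
  have tY: "take p Y \<noteq> []" using p1 Yne by simp
  have hR: "hd R = hd Y" unfolding R_def using tY p1 by (simp add: hd_append hd_take)
  have Zne: "Z \<noteq> []" using lZ j2 by auto
  have tX: "take p X \<noteq> []" using p1 Xne by simp
  have hZ: "hd Z = X ! 0" unfolding Z_def using tX p1 Xne by (simp add: hd_append hd_take hd_conv_nth)
  have hY: "hd Y = Y ! 0" using Yne by (simp add: hd_conv_nth)
  have Zc: "Z = hd Z # tl Z" using Zne by simp
  have sFs: "sorted_wrt (\<ge>) Fs"
  proof -
    have t: "sorted_wrt (\<ge>) (tl Z)" using sZ by (cases Z) auto
    have "sorted_wrt (\<ge>) (hd Z # tl Z)" using sZ Zne by (cases Z) auto
    then have "\<forall>z\<in>set (tl Z). z \<le> hd Z" by simp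
    then have a: "\<forall>z\<in>set (map (\<lambda>z. z - 1) (tl Z)). z \<le> hd Z" by auto
    have b: "sorted_wrt (\<ge>) (map (\<lambda>z. z - 1) (tl Z))" unfolding sorted_wrt_map
      by (rule sorted_wrt_mono_rel[OF _ t]) auto
    have c: "hd Z \<le> hd Y - 1" using hZ hY hXY by simp
    have d: "\<forall>z\<in>set (map (\<lambda>z. z - 1) (tl Z)). z \<le> hd Y - 1" using a c by auto
    show ?thesis unfolding Fs_def using a b c d by simp
  qed
  have lFs: "length Fs = j" unfolding Fs_def using lZ j2 by simp
  have Fs1: "Fs ! 1 = hd Z" unfolding Fs_def by simp
  have two: "3 \<le> j \<longrightarrow> Fs ! 2 < Fs ! 1"
  proof
    assume j3: "3 \<le> j"
    then have "tl Z \<noteq> []" using lZ by (cases Z) auto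
    then have "Fs ! 2 = hd (tl Z) - 1" unfolding Fs_def by (cases "tl Z") (auto simp: numeral_2_eq_2)
    moreover have "hd (tl Z) \<le> hd Z"
    proof -
      have "sorted_wrt (\<ge>) (hd Z # tl Z)" using sZ Zne by (cases Z) auto
      then have "\<forall>z\<in>set (tl Z). z \<le> hd Z" by simp
      moreover have "hd (tl Z) \<in> set (tl Z)" using \<open>tl Z \<noteq> []\<close> by simp
      ultimately show ?thesis by blast
    qed
    moreover have "1 \<le> hd Z" using pZ Zne by simp
    ultimately show "Fs ! 2 < Fs ! 1" using Fs1 by simp
  qed
  have Fs1p: "1 \<le> Fs ! 1" using Fs1 pZ Zne by simp
  have sumRZ: "sum_list R + sum_list Z = sum_list X + sum_list Y"
  proof -
    have "sum_list R + sum_list Z = (sum_list (take p Y) + sum_list (drop p Y)) + (sum_list (take p X) + sum_list (drop p X))"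
      unfolding R_def Z_def by simp
    also have "\<dots> = sum_list Y + sum_list X"
      using sum_list_append[of "take p Y" "drop p Y"] sum_list_append[of "take p X" "drop p X"] by simp
    finally show ?thesis by simp
  qed
  have sFs_eq: "sum_list Fs + (j - 2) = hd Y - 1 + sum_list Z"
  proof -
    have pt: "\<forall>x\<in>set (tl Z). 1 \<le> x" using pZ list.set_sel(2)[OF Zne] by blast
    have "length (tl Z) = j - 2" using lZ by simp
    moreover have "sum_list Z = hd Z + sum_list (tl Z)" using Zne by (cases Z) auto
    ultimately show ?thesis unfolding Fs_def using sum_minus1[OF pt] by simp
  qed
  have hY1: "1 \<le> hd Y" using hY hXY by simp
  have hFs: "hd Fs = hd Y - 1" unfolding Fs_def by simp
  have ar: "sum_list R + sum_list Fs + (j - 2) = sum_list X + sum_list Y + hd Y - 1"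
    using sumRZ sFs_eq hY1 by linarith
  show ?thesis using lR sR pR hR sFs lFs two Fs1p ar hFs by blast
qed



definition coreR :: "nat \<Rightarrow> nat list \<Rightarrow> nat list \<Rightarrow> nat list" where
  "coreR j X Y = take (cutp j X Y) Y @ drop (cutp j X Y) X"
definition coreZ :: "nat \<Rightarrow> nat list \<Rightarrow> nat list \<Rightarrow> nat list" where
  "coreZ j X Y = take (cutp j X Y) X @ drop (cutp j X Y) Y"
definition coreF :: "nat \<Rightarrow> nat list \<Rightarrow> nat list \<Rightarrow> nat list" where
  "coreF j X Y = (hd Y - 1) # hd (coreZ j X Y) # map (\<lambda>z. z - 1) (tl (coreZ j X Y))"

definition good :: "nat \<Rightarrow> nat list \<Rightarrow> nat list \<Rightarrow> bool" where
  "good j X Y \<longleftrightarrow> 2 \<le> j \<and> length Y = j - 1 \<and> j - 1 \<le> length X \<and> sorted_wrt (\<ge>) X \<and> sorted_wrt (\<ge>) Y \<and>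
     (\<forall>x\<in>set X. 1 \<le> x) \<and> (\<forall>y\<in>set Y. 1 \<le> y) \<and> X ! 0 < Y ! 0"

lemma core_valid':
  assumes "good j X Y"
  shows "length (coreR j X Y) = length X \<and> sorted_wrt (\<ge>) (coreR j X Y) \<and> (\<forall>x\<in>set (coreR j X Y). 1 \<le> x) \<and>
         hd (coreR j X Y) = hd Y \<and>
         sorted_wrt (\<ge>) (coreF j X Y) \<and> length (coreF j X Y) = j \<and> hd (coreF j X Y) = hd Y - 1 \<and>
         (3 \<le> j \<longrightarrow> coreF j X Y ! 2 < coreF j X Y ! 1) \<and> 1 \<le> coreF j X Y ! 1 \<and>
         sum_list (coreR j X Y) + sum_list (coreF j X Y) + (j - 2) = sum_list X + sum_list Y + hd Y - 1"
  using assms core_valid[of j Y X] unfolding good_def coreR_def coreF_def coreZ_def by blast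

lemma nth_td:
  assumes "p \<le> length A" "p \<le> length B"
  shows "(take p A @ drop p B) ! i = (if i < p then A ! i else B ! i)"
  using assms by (auto simp: nth_append min_def)

lemma coreZ_props:
  assumes "good j X Y"
  shows "coreZ j X Y \<noteq> [] \<and> (\<forall>z\<in>set (coreZ j X Y). 1 \<le> z)"
proof -
  let ?p = "cutp j X Y"
  have p: "1 \<le> ?p" "?p \<le> j - 1" using cutp_props assms unfolding good_def by auto
  have ne: "X \<noteq> []" using assms p unfolding good_def by auto
  have "coreZ j X Y \<noteq> []" unfolding coreZ_def using p ne by simp
  moreover have "\<forall>z\<in>set (coreZ j X Y). 1 \<le> z"
  proof
    fix x assume "x \<in> set (coreZ j X Y)"
    then have "x \<in> set (take ?p X) \<or> x \<in> set (drop ?p Y)" unfolding coreZ_def by simp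
    then have "x \<in> set Y \<or> x \<in> set X" by (blast dest: in_set_takeD in_set_dropD)
    then show "1 \<le> x" using assms unfolding good_def by blast
  qed
  ultimately show ?thesis by blast
qed

lemma cut_not_less:
  assumes g1: "good j X1 Y1" and g2: "good j X2 Y2"
    and R: "coreR j X1 Y1 = coreR j X2 Y2" and Z: "coreZ j X1 Y1 = coreZ j X2 Y2"
  shows "\<not> cutp j X1 Y1 < cutp j X2 Y2"
proof
  let ?p1 = "cutp j X1 Y1" and ?p2 = "cutp j X2 Y2"
  assume lt: "?p1 < ?p2"
  have j2: "2 \<le> j" using g1 unfolding good_def by simp
  have p1: "1 \<le> ?p1" "?p1 \<le> j - 1" using cutp_props[OF j2] by auto
  have p2: "1 \<le> ?p2" "?p2 \<le> j - 1" using cutp_props[OF j2] by auto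
  have l1: "length Y1 = j - 1" "j - 1 \<le> length X1" using g1 unfolding good_def by auto
  have l2: "length Y2 = j - 1" "j - 1 \<le> length X2" using g2 unfolding good_def by auto
  have c1: "Y1 ! ?p1 \<le> X1 ! (?p1 - 1)" using cutp_props(3)[OF j2, of X1 Y1] lt p2 by auto
  have m2: "X2 ! (?p1 - 1) < Y2 ! ?p1" using cutp_props(4)[OF j2, of ?p1 X2 Y2] lt p1 by auto
  have "coreR j X1 Y1 ! ?p1 = X1 ! ?p1" unfolding coreR_def using nth_td[of ?p1 Y1 X1 ?p1] p1 l1 by simp
  moreover have "coreR j X2 Y2 ! ?p1 = Y2 ! ?p1" unfolding coreR_def using nth_td[of ?p2 Y2 X2 ?p1] p2 l2 lt by simp
  moreover have "coreZ j X1 Y1 ! (?p1 - 1) = X1 ! (?p1 - 1)" unfolding coreZ_def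
    using nth_td[of ?p1 X1 Y1 "?p1 - 1"] p1 l1 by simp
  moreover have "coreZ j X2 Y2 ! (?p1 - 1) = X2 ! (?p1 - 1)"
  proof -
    have "?p1 - 1 < ?p2" using lt by linarith
    then show ?thesis using nth_td[of ?p2 X2 Y2 "?p1 - 1"] p2 l2 by (simp add: coreZ_def)
  qed
  moreover have "X1 ! ?p1 \<le> X1 ! (?p1 - 1)"
    using sorted_nth_mono[of X1 "?p1 - 1" ?p1] g1 p1 l1 lt p2 unfolding good_def by simp
  ultimately show False using R Z c1 m2 by simp
qed

lemma core_inj:
  assumes g1: "good j X1 Y1" and g2: "good j X2 Y2" and lX: "length X1 = length X2"
    and R: "coreR j X1 Y1 = coreR j X2 Y2" and F: "coreF j X1 Y1 = coreF j X2 Y2"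
  shows "X1 = X2 \<and> Y1 = Y2"
proof -
  have Zp1: "coreZ j X1 Y1 \<noteq> []" "\<forall>z\<in>set (coreZ j X1 Y1). 1 \<le> z" using coreZ_props[OF g1] by auto
  have Zp2: "coreZ j X2 Y2 \<noteq> []" "\<forall>z\<in>set (coreZ j X2 Y2). 1 \<le> z" using coreZ_props[OF g2] by auto
  have hd: "hd (coreZ j X1 Y1) = hd (coreZ j X2 Y2)" and tl: "map (\<lambda>z. z - 1) (tl (coreZ j X1 Y1)) = map (\<lambda>z. z - 1) (tl (coreZ j X2 Y2))"
    using F unfolding coreF_def by auto
  have inv: "\<forall>z\<in>set L. 1 \<le> z \<Longrightarrow> map (\<lambda>z. z + 1) (map (\<lambda>z. z - 1) L) = L" for L :: "nat list"
    by (induction L) auto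
  have t1: "\<forall>z\<in>set (tl (coreZ j X1 Y1)). 1 \<le> z" using Zp1 list.set_sel(2)[OF Zp1(1)] by blast
  have t2: "\<forall>z\<in>set (tl (coreZ j X2 Y2)). 1 \<le> z" using Zp2 list.set_sel(2)[OF Zp2(1)] by blast
  have "tl (coreZ j X1 Y1) = tl (coreZ j X2 Y2)" using inv[OF t1] inv[OF t2] tl by metis
  then have Z: "coreZ j X1 Y1 = coreZ j X2 Y2" using hd Zp1(1) Zp2(1) by (metis list.collapse)
  have "\<not> cutp j X1 Y1 < cutp j X2 Y2" using cut_not_less[OF g1 g2 R Z] .
  moreover have "\<not> cutp j X2 Y2 < cutp j X1 Y1" using cut_not_less[OF g2 g1 R[symmetric] Z[symmetric]] .
  ultimately have peq: "cutp j X1 Y1 = cutp j X2 Y2" by simp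
  define p where "p = cutp j X1 Y1"
  have j2: "2 \<le> j" using g1 unfolding good_def by simp
  have pp: "1 \<le> p" "p \<le> j - 1" using cutp_props[OF j2] unfolding p_def by auto
  have l1: "length Y1 = j - 1" "j - 1 \<le> length X1" using g1 unfolding good_def by auto
  have l2: "length Y2 = j - 1" "j - 1 \<le> length X2" using g2 unfolding good_def by auto
  have R': "take p Y1 @ drop p X1 = take p Y2 @ drop p X2" using R peq unfolding coreR_def p_def by simp
  have Z': "take p X1 @ drop p Y1 = take p X2 @ drop p Y2" using Z peq unfolding coreZ_def p_def by simp
  have "take p Y1 = take p Y2 \<and> drop p X1 = drop p X2"
    using R' pp l1 l2 by (simp add: append_eq_append_conv)
  moreover have "take p X1 = take p X2 \<and> drop p Y1 = drop p Y2"
    using Z' pp l1 l2 by (simp add: append_eq_append_conv)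
  ultimately show ?thesis by (metis append_take_drop_id)
qed



definition phi :: "nat \<Rightarrow> nat list \<Rightarrow> nat list" where
  "phi m xs = (let j = durfee_j m xs; N = m + j;
     X = map (\<lambda>x. x - j) (take (N - 1) xs); Bh = drop (N + 1) xs;
     Y = map (\<lambda>k. Suc (cnt Bh k)) [2..<j+1]
   in map (\<lambda>x. x + j) (coreR j X Y) @ [j, j] @ unc (coreF j X Y))"

lemma cnt_antimono: "k \<le> k' \<Longrightarrow> cnt L k' \<le> cnt L k"
  by (induction L) (auto simp: cnt_def)

lemma sum_ind: "sum_list (map (\<lambda>k. if k \<le> x then 1 else 0) [1..<j+1]) = min x (j::nat)"
  by (induction j) auto

lemma sum_cnt: "\<forall>x\<in>set L. x \<le> j \<Longrightarrow> sum_list L = sum_list (map (cnt L) [1..<j+1])"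
proof (induction L)
  case Nil then show ?case by (simp add: cnt_def)
next
  case (Cons a L)
  have e: "map (cnt (a # L)) [1..<j+1] = map (\<lambda>k. (if k \<le> a then 1 else 0) + cnt L k) [1..<j+1]"
    by (simp add: cnt_Cons)
  have "sum_list (map (cnt (a # L)) [1..<j+1]) =
        sum_list (map (\<lambda>k. if k \<le> a then 1 else 0) [1..<j+1]) + sum_list (map (cnt L) [1..<j+1])"
    unfolding e by (simp add: sum_list_addf del: upt_Suc)
  also have "\<dots> = a + sum_list L" using sum_ind[of a j] Cons by simp
  finally show ?case by simp
qed

lemma cnt_top: "sorted_wrt (\<ge>) (a # L) \<Longrightarrow> cnt (a # L) (Suc a) = 0"
  by (auto simp: cnt_def filter_empty_conv)

lemma cnt_eq_imp_eq:
  fixes L1 L2 :: "nat list"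
  assumes "sorted_wrt (\<ge>) L1" "sorted_wrt (\<ge>) L2" "\<forall>x\<in>set L1. 1 \<le> x" "\<forall>x\<in>set L2. 1 \<le> x"
    and "\<And>k. 1 \<le> k \<Longrightarrow> cnt L1 k = cnt L2 k"
  shows "L1 = L2"
  using assms
proof (induction L1 arbitrary: L2)
  case Nil
  have "cnt L2 1 = 0" using Nil(5)[of 1] by (simp add: cnt_def)
  then have "filter (\<lambda>x. 1 \<le> x) L2 = []" unfolding cnt_def by simp
  then show ?case using Nil(4) by (simp add: filter_empty_conv)
next
  case (Cons a L1)
  have "cnt L2 (Suc 0) = cnt (a # L1) (Suc 0)" using Cons(6)[of 1] by simp
  moreover have "cnt (a # L1) (Suc 0) \<ge> 1" using Cons(4) by (simp add: cnt_Cons)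
  ultimately obtain b L2' where L2: "L2 = b # L2'" by (cases L2) (auto simp: cnt_def)
  have ab: "a = b"
  proof (rule ccontr)
    assume "a \<noteq> b"
    then consider "a < b" | "b < a" by linarith
    then show False
    proof cases
      case 1
      have "cnt (a # L1) b = 0" using cnt_top[OF Cons(2)] cnt_antimono[of "Suc a" b "a # L1"] 1 by simp
      moreover have "cnt L2 b \<ge> 1" unfolding L2 by (simp add: cnt_Cons)
      moreover have "1 \<le> b" using 1 by simp
      ultimately show False using Cons(6)[of b] by simp
    next
      case 2
      have "cnt L2 a = 0" using cnt_top[of b L2'] Cons(3) cnt_antimono[of "Suc b" a L2] 2 unfolding L2 by simp
      moreover have "cnt (a # L1) a \<ge> 1" by (simp add: cnt_Cons)
      moreover have "1 \<le> a" using Cons(4) by simp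
      ultimately show False using Cons(6)[of a] by simp
    qed
  qed
  have "L1 = L2'"
  proof (rule Cons.IH)
    show "sorted_wrt (\<ge>) L1" using Cons(2) by simp
    show "sorted_wrt (\<ge>) L2'" using Cons(3) L2 by simp
    show "\<forall>x\<in>set L1. 1 \<le> x" using Cons(4) by simp
    show "\<forall>x\<in>set L2'. 1 \<le> x" using Cons(5) L2 by simp
    fix k :: nat assume "1 \<le> k"
    then show "cnt L1 k = cnt L2' k" using Cons(6)[of k] L2 ab by (simp add: cnt_Cons split: if_splits)
  qed
  then show ?case using L2 ab by simp
qed

lemma map_add_sub: "\<forall>x\<in>set T. j \<le> x \<Longrightarrow> map (\<lambda>x. x + j) (map (\<lambda>x. x - j) T) = (T :: nat list)"
  by (induction T) auto

lemma mu_durfee: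
  assumes j2: "2 \<le> j" and lR: "length R = m + j - 1" and sR: "sorted_wrt (\<ge>) R"
    and sF: "sorted_wrt (\<ge>) F" and pF: "\<forall>x\<in>set F. x \<le> j"
  shows "durfee_j m (map (\<lambda>x. x + j) R @ [j, j] @ F) = j"
proof -
  define mu where "mu = map (\<lambda>x. x + j) R @ [j, j] @ F"
  have smu: "sorted_wrt (\<ge>) mu" unfolding mu_def using sR sF pF
    by (auto simp: sorted_wrt_append sorted_wrt_map)
  have NR: "m + j = Suc (length R)" using lR j2 by simp
  have lmu: "length mu = m + j + 1 + length F" unfolding mu_def using NR by simp
  have muN1: "mu ! (m + j - 1) = j" unfolding mu_def using lR by (simp add: nth_append)
  have muN: "mu ! (m + j) = j" unfolding mu_def NR by (simp add: nth_append)
  have pj: "part mu (m + j) = j" using muN1 j2 lmu by (simp add: part_def)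
  have pj1: "part mu (m + j + 1) = j" using muN j2 lmu by (simp add: part_def)
  show ?thesis using durfee_eq[OF smu, where m=m and j=j] pj pj1 unfolding mu_def by simp
qed

lemma phi_facts:
  assumes Q: "xs \<in> Q4 m n"
  defines "j \<equiv> durfee_j m xs"
  defines "N \<equiv> m + j"
  defines "X \<equiv> map (\<lambda>x. x - j) (take (N - 1) xs)"
  defines "Bh \<equiv> drop (N + 1) xs"
  defines "Y \<equiv> map (\<lambda>k. Suc (cnt Bh k)) [2..<j+1]"
  shows "good j X Y \<and> phi m xs = map (\<lambda>x. x + j) (coreR j X Y) @ [j, j] @ unc (coreF j X Y) \<and>
         xs = map (\<lambda>x. x + j) X @ [j + 1, j] @ Bh \<and> length X = N - 1 \<and>
         (\<forall>x\<in>set Bh. 2 \<le> x \<and> x \<le> j) \<and> sorted_wrt (\<ge>) Bh \<and>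
         (\<forall>k. 2 \<le> k \<and> k \<le> j \<longrightarrow> Y ! (k - 2) = Suc (cnt Bh k)) \<and>
         sum_list xs = n \<and> 2 \<le> j \<and> length Y = j - 1 \<and> hd Y = Suc (length Bh) \<and>
         sum_list Y = (j - 1) + sum_list Bh - length Bh"
proof -
  have S: "2 \<le> j \<and> N + 1 \<le> length xs \<and> xs ! (N-1) = j+1 \<and> xs ! N = j \<and>
         (\<forall>i<N. j+1 \<le> xs!i) \<and> (\<forall>x\<in>set (drop (N+1) xs). 2 \<le> x \<and> x \<le> j) \<and>
         xs!0 - j + N + 1 \<le> length xs \<and> sorted_wrt (\<ge>) xs \<and> sum_list xs = n \<and> (\<forall>x\<in>set xs. 0<x)"
    using Q4_struct[OF Q] unfolding N_def j_def by simp
  then have j2: "2 \<le> j" and lxs: "N + 1 \<le> length xs" and xN1: "xs ! (N-1) = j+1" and xN: "xs ! N = j"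
    and top: "\<forall>i<N. j+1 \<le> xs!i" and bot: "\<forall>x\<in>set Bh. 2 \<le> x \<and> x \<le> j"
    and l0: "xs!0 - j + N + 1 \<le> length xs" and sxs: "sorted_wrt (\<ge>) xs" and sm: "sum_list xs = n"
    unfolding Bh_def by auto
  have phi_eq: "phi m xs = map (\<lambda>x. x + j) (coreR j X Y) @ [j, j] @ unc (coreF j X Y)"
    unfolding phi_def Let_def X_def Y_def Bh_def N_def j_def ..
  have lX: "length X = N - 1" unfolding X_def using lxs by simp
  have Ntop: "\<forall>x\<in>set (take (N - 1) xs). j + 1 \<le> x"
  proof
    fix x assume "x \<in> set (take (N - 1) xs)"
    then obtain i where "i < N - 1" "i < length xs" "x = xs ! i" by (auto simp: in_set_conv_nth)
    then show "j + 1 \<le> x" using top by auto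
  qed
  have mapX: "map (\<lambda>x. x + j) X = take (N - 1) xs"
    unfolding X_def using Ntop by (intro map_add_sub) auto
  have dN: "drop (N - 1) xs = [j + 1, j] @ Bh"
  proof -
    have "N - 1 < length xs" "N < length xs" using lxs by auto
    have N1: "Suc (N - 1) = N" using j2 unfolding N_def by simp
    have "drop (N - 1) xs = xs ! (N - 1) # drop (Suc (N - 1)) xs"
      using Cons_nth_drop_Suc[of "N-1" xs] \<open>N - 1 < length xs\<close> by simp
    then have "drop (N - 1) xs = xs ! (N - 1) # drop N xs" using N1 by simp
    also have "drop N xs = xs ! N # drop (N + 1) xs" using \<open>N < length xs\<close> by (simp add: Cons_nth_drop_Suc)
    finally show ?thesis using xN1 xN unfolding Bh_def using j2 N_def by (simp add: numeral_2_eq_2)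
  qed
  have xs_eq: "xs = map (\<lambda>x. x + j) X @ [j + 1, j] @ Bh" unfolding mapX dN[symmetric] by simp
  have sX: "sorted_wrt (\<ge>) X" unfolding X_def
    by (rule sorted_wrt_map_mono[of "(\<ge>)"]) (auto intro: sorted_wrt_take[OF sxs])
  have pX: "\<forall>x\<in>set X. 1 \<le> x" unfolding X_def using Ntop by auto
  have sBh: "sorted_wrt (\<ge>) Bh" unfolding Bh_def using sxs by (simp add: sorted_wrt_drop)
  have lY: "length Y = j - 1" unfolding Y_def using j2 by simp
  have sY: "sorted_wrt (\<ge>) Y" unfolding Y_def sorted_wrt_map
  proof (rule sorted_wrt_mono_rel[OF _ sorted_wrt_upt])
    fix a b :: nat assume "a < b" then show "Suc (cnt Bh b) \<le> Suc (cnt Bh a)" using cnt_antimono by simp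
  qed
  have pY: "\<forall>y\<in>set Y. 1 \<le> y" unfolding Y_def by auto
  have Ynth: "\<forall>k. 2 \<le> k \<and> k \<le> j \<longrightarrow> Y ! (k - 2) = Suc (cnt Bh k)" unfolding Y_def
  proof (intro allI impI)
    fix k :: nat assume k: "2 \<le> k \<and> k \<le> j"
    then have "Suc (Suc (k - 2)) = k" by linarith
    have lt: "k - 2 < j + 1 - 2" using k by linarith
    have lt2: "2 + (k - 2) < j + 1" using k by linarith
    have "[2..<j+1] ! (k - 2) = 2 + (k - 2)" using nth_upt[OF lt2] .
    then have u: "[2..<j+1] ! (k - 2) = k" using k by linarith
    have "map (\<lambda>k. Suc (cnt Bh k)) [2..<j+1] ! (k - 2) = Suc (cnt Bh ([2..<j+1] ! (k - 2)))"
      using lt by (simp del: upt_Suc)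
    then show "map (\<lambda>k. Suc (cnt Bh k)) [2..<j+1] ! (k - 2) = Suc (cnt Bh k)" using u by simp
  qed
  have c2: "cnt Bh 2 = length Bh" using bot unfolding cnt_def by (simp add: filter_True)
  have b1: "\<forall>x\<in>set Bh. Suc 0 \<le> x" using bot by auto
  have c1: "cnt Bh 1 = length Bh" using b1 unfolding cnt_def by (simp add: filter_True)
  have Y0: "Y ! 0 = Suc (length Bh)" using Ynth j2 c2 by auto
  have hY: "hd Y = Suc (length Bh)" using Y0 lY j2 by (cases Y) auto
  have X0: "X ! 0 = xs ! 0 - j" unfolding X_def using lxs j2 unfolding N_def by simp
  have lBh: "length Bh = length xs - (N + 1)" unfolding Bh_def by simp
  have XY: "X ! 0 < Y ! 0" using X0 Y0 l0 lBh by simp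
  have good: "good j X Y" unfolding good_def using j2 lY lX sX sY pX pY XY unfolding N_def by simp
  have sY_eq: "sum_list Y = (j - 1) + sum_list (map (cnt Bh) [2..<j+1])"
    unfolding Y_def by (simp add: sum_list_Suc del: upt_Suc)
  have sBh_eq: "sum_list Bh = sum_list (map (cnt Bh) [1..<j+1])" using sum_cnt bot by auto
  have "[1..<j+1] = 1 # [2..<j+1]" using j2 upt_conv_Cons[of 1 "j+1"] by (simp add: numeral_2_eq_2 del: upt_Suc)
  then have "sum_list Bh = length Bh + sum_list (map (cnt Bh) [2..<j+1])" using sBh_eq c1 by simp
  then have sumY: "sum_list Y = (j - 1) + sum_list Bh - length Bh" using sY_eq by simp
  show ?thesis using good phi_eq xs_eq lX bot sBh Ynth sm j2 lY hY sumY by blast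
qed



lemma sum_map_add: "sum_list (map (\<lambda>x. x + j) L) = sum_list L + j * length (L :: nat list)"
  by (induction L) auto

lemma len_le_sum: "\<forall>x\<in>set L. 1 \<le> x \<Longrightarrow> length L \<le> sum_list (L :: nat list)"
  using sum_minus1[of L] by simp

lemma phi_in:
  assumes Q: "xs \<in> Q4 m n"
  shows "phi m xs \<in> P4 m n"
proof -
  define j where "j = durfee_j m xs"
  define N where "N = m + j"
  define X where "X = map (\<lambda>x. x - j) (take (N - 1) xs)"
  define Bh where "Bh = drop (N + 1) xs"
  define Y where "Y = map (\<lambda>k. Suc (cnt Bh k)) [2..<j+1]"
  have PF: "good j X Y \<and> phi m xs = map (\<lambda>x. x + j) (coreR j X Y) @ [j, j] @ unc (coreF j X Y) \<and>
         xs = map (\<lambda>x. x + j) X @ [j + 1, j] @ Bh \<and> length X = N - 1 \<and>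
         (\<forall>x\<in>set Bh. 2 \<le> x \<and> x \<le> j) \<and> sorted_wrt (\<ge>) Bh \<and>
         (\<forall>k. 2 \<le> k \<and> k \<le> j \<longrightarrow> Y ! (k - 2) = Suc (cnt Bh k)) \<and>
         sum_list xs = n \<and> 2 \<le> j \<and> length Y = j - 1 \<and> hd Y = Suc (length Bh) \<and>
         sum_list Y = (j - 1) + sum_list Bh - length Bh"
    using phi_facts[OF Q] unfolding j_def N_def X_def Bh_def Y_def by blast
  then have g: "good j X Y" and phi_eq: "phi m xs = map (\<lambda>x. x + j) (coreR j X Y) @ [j, j] @ unc (coreF j X Y)"
    and xs_eq: "xs = map (\<lambda>x. x + j) X @ [j + 1, j] @ Bh" and lX: "length X = N - 1"
    and bot: "\<forall>x\<in>set Bh. 2 \<le> x \<and> x \<le> j" and sm: "sum_list xs = n" and j2: "2 \<le> j"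
    and hY: "hd Y = Suc (length Bh)" and sY: "sum_list Y = (j - 1) + sum_list Bh - length Bh"
    by auto
  define R where "R = coreR j X Y"
  define Fs where "Fs = coreF j X Y"
  have CV: "length R = length X \<and> sorted_wrt (\<ge>) R \<and> (\<forall>x\<in>set R. 1 \<le> x) \<and>
         hd R = hd Y \<and>
         sorted_wrt (\<ge>) Fs \<and> length Fs = j \<and> hd Fs = hd Y - 1 \<and>
         (3 \<le> j \<longrightarrow> Fs ! 2 < Fs ! 1) \<and> 1 \<le> Fs ! 1 \<and>
         sum_list R + sum_list Fs + (j - 2) = sum_list X + sum_list Y + hd Y - 1"
    using core_valid'[OF g] unfolding R_def Fs_def by blast
  then have lR: "length R = length X" and sR: "sorted_wrt (\<ge>) R" and pR: "\<forall>x\<in>set R. 1 \<le> x"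
    and hR: "hd R = hd Y" and sFs: "sorted_wrt (\<ge>) Fs" and lFs: "length Fs = j" and hFs: "hd Fs = hd Y - 1"
    and t3: "3 \<le> j \<longrightarrow> Fs ! 2 < Fs ! 1"
    and sumc: "sum_list R + sum_list Fs + (j - 2) = sum_list X + sum_list Y + hd Y - 1"
    by auto
  define F where "F = unc Fs"
  have sF: "sorted_wrt (\<ge>) F" unfolding F_def by (rule unc_sorted)
  have pF: "\<forall>x\<in>set F. 1 \<le> x \<and> x \<le> j" unfolding F_def using unc_set lFs by metis
  have Fsne: "Fs = hd Fs # tl Fs" unfolding Fs_def coreF_def by simp
  have lF: "length F = hd Fs" unfolding F_def using unc_len[OF sFs] Fsne by (metis hd0.simps(2))
  have two: "2 \<in> set F \<or> j = 2"
  proof (cases "j = 2")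
    case False
    then have j3: "3 \<le> j" using j2 by simp
    have "cnt F 2 = Fs ! 1" unfolding F_def using unc_cnt[OF sFs, of 2] lFs j3 by simp
    moreover have "cnt F 3 = Fs ! 2" unfolding F_def using unc_cnt[OF sFs, of 3] lFs j3 by simp
    ultimately have "cnt F 3 < cnt F 2" using t3 j3 by simp
    then show ?thesis using two_in by blast
  qed simp
  have hY1: "1 \<le> hd Y" using hY by simp
  have lFR: "length F + 1 = hd R" using lF hFs hR hY1 by simp
  have "\<forall>x\<in>set Bh. 1 \<le> x" using bot by auto
  then have lBs: "length Bh \<le> sum_list Bh" by (rule len_le_sum)
  have sumF: "sum_list F = sum_list Fs" unfolding F_def using unc_sum[OF sFs] .
  have sRF: "sum_list R + sum_list F = sum_list X + sum_list Bh + 1"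
    using sumc sY hY lBs j2 sumF by simp
  have "sum_list xs = sum_list X + j * (N - 1) + (j + 1) + j + sum_list Bh"
    using xs_eq lX sum_map_add[of j X] by (metis append_Cons append_Nil sum_list.Cons sum_list_append add.assoc)
  then have sum_mu: "sum_list (map (\<lambda>x. x + j) R @ [j, j] @ F) = n"
    using sm sRF sum_map_add[of j R] lR lX by simp
  have "map (\<lambda>x. x + j) R @ [j, j] @ F \<in> P4 m n"
  proof (rule P4_intro[OF j2 N_def])
    show "length R = N - 1" using lR lX by simp
  qed (use sR pR sF pF two lFR sum_mu in auto)
  then show ?thesis using phi_eq unfolding R_def F_def Fs_def by simp
qed



lemma phi_inj:
  assumes Q1: "xs1 \<in> Q4 m n" and Q2: "xs2 \<in> Q4 m n" and eq: "phi m xs1 = phi m xs2"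
  shows "xs1 = xs2"
proof -
  define j1 where "j1 = durfee_j m xs1"
  define X1 where "X1 = map (\<lambda>x. x - j1) (take (m + j1 - 1) xs1)"
  define Bh1 where "Bh1 = drop (m + j1 + 1) xs1"
  define Y1 where "Y1 = map (\<lambda>k. Suc (cnt Bh1 k)) [2..<j1+1]"
  define j2 where "j2 = durfee_j m xs2"
  define X2 where "X2 = map (\<lambda>x. x - j2) (take (m + j2 - 1) xs2)"
  define Bh2 where "Bh2 = drop (m + j2 + 1) xs2"
  define Y2 where "Y2 = map (\<lambda>k. Suc (cnt Bh2 k)) [2..<j2+1]"
  have P1: "good j1 X1 Y1 \<and> phi m xs1 = map (\<lambda>x. x + j1) (coreR j1 X1 Y1) @ [j1, j1] @ unc (coreF j1 X1 Y1) \<and>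
         xs1 = map (\<lambda>x. x + j1) X1 @ [j1 + 1, j1] @ Bh1 \<and> length X1 = m + j1 - 1 \<and>
         (\<forall>x\<in>set Bh1. 2 \<le> x \<and> x \<le> j1) \<and> sorted_wrt (\<ge>) Bh1 \<and>
         (\<forall>k. 2 \<le> k \<and> k \<le> j1 \<longrightarrow> Y1 ! (k - 2) = Suc (cnt Bh1 k))"
    using phi_facts[OF Q1] unfolding j1_def X1_def Bh1_def Y1_def by blast
  have P2: "good j2 X2 Y2 \<and> phi m xs2 = map (\<lambda>x. x + j2) (coreR j2 X2 Y2) @ [j2, j2] @ unc (coreF j2 X2 Y2) \<and>
         xs2 = map (\<lambda>x. x + j2) X2 @ [j2 + 1, j2] @ Bh2 \<and> length X2 = m + j2 - 1 \<and>
         (\<forall>x\<in>set Bh2. 2 \<le> x \<and> x \<le> j2) \<and> sorted_wrt (\<ge>) Bh2 \<and>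
         (\<forall>k. 2 \<le> k \<and> k \<le> j2 \<longrightarrow> Y2 ! (k - 2) = Suc (cnt Bh2 k))"
    using phi_facts[OF Q2] unfolding j2_def X2_def Bh2_def Y2_def by blast
  have g1: "good j1 X1 Y1" and e1: "phi m xs1 = map (\<lambda>x. x + j1) (coreR j1 X1 Y1) @ [j1, j1] @ unc (coreF j1 X1 Y1)"
    and x1: "xs1 = map (\<lambda>x. x + j1) X1 @ [j1 + 1, j1] @ Bh1" and lX1: "length X1 = m + j1 - 1"
    and b1: "\<forall>x\<in>set Bh1. 2 \<le> x \<and> x \<le> j1" and sb1: "sorted_wrt (\<ge>) Bh1"
    and y1: "\<forall>k. 2 \<le> k \<and> k \<le> j1 \<longrightarrow> Y1 ! (k - 2) = Suc (cnt Bh1 k)" using P1 by auto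
  have g2: "good j2 X2 Y2" and e2: "phi m xs2 = map (\<lambda>x. x + j2) (coreR j2 X2 Y2) @ [j2, j2] @ unc (coreF j2 X2 Y2)"
    and x2: "xs2 = map (\<lambda>x. x + j2) X2 @ [j2 + 1, j2] @ Bh2" and lX2: "length X2 = m + j2 - 1"
    and b2: "\<forall>x\<in>set Bh2. 2 \<le> x \<and> x \<le> j2" and sb2: "sorted_wrt (\<ge>) Bh2"
    and y2: "\<forall>k. 2 \<le> k \<and> k \<le> j2 \<longrightarrow> Y2 ! (k - 2) = Suc (cnt Bh2 k)" using P2 by auto
  have CV1: "length (coreR j1 X1 Y1) = length X1 \<and> sorted_wrt (\<ge>) (coreR j1 X1 Y1) \<and>
      sorted_wrt (\<ge>) (coreF j1 X1 Y1) \<and> length (coreF j1 X1 Y1) = j1" using core_valid'[OF g1] by blast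
  have CV2: "length (coreR j2 X2 Y2) = length X2 \<and> sorted_wrt (\<ge>) (coreR j2 X2 Y2) \<and>
      sorted_wrt (\<ge>) (coreF j2 X2 Y2) \<and> length (coreF j2 X2 Y2) = j2" using core_valid'[OF g2] by blast
  have jj1: "2 \<le> j1" using g1 unfolding good_def by simp
  have jj2: "2 \<le> j2" using g2 unfolding good_def by simp
  have u1: "\<forall>x\<in>set (unc (coreF j1 X1 Y1)). x \<le> j1" using unc_set[of _ "coreF j1 X1 Y1"] CV1 by auto
  have u2: "\<forall>x\<in>set (unc (coreF j2 X2 Y2)). x \<le> j2" using unc_set[of _ "coreF j2 X2 Y2"] CV2 by auto
  have d1: "durfee_j m (phi m xs1) = j1" unfolding e1
    by (rule mu_durfee[OF jj1 _ _ unc_sorted u1]) (use CV1 lX1 in auto)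
  have d2: "durfee_j m (phi m xs2) = j2" unfolding e2
    by (rule mu_durfee[OF jj2 _ _ unc_sorted u2]) (use CV2 lX2 in auto)
  have jeq: "j1 = j2" using d1 d2 eq by simp
  define j where "j = j1"
  have jd: "j2 = j" using jeq unfolding j_def by simp
  have lR: "length (map (\<lambda>x. x + j) (coreR j X1 Y1)) = length (map (\<lambda>x. x + j) (coreR j X2 Y2))"
    using CV1 CV2 lX1 lX2 jeq unfolding j_def by simp
  have "map (\<lambda>x. x + j) (coreR j X1 Y1) @ ([j, j] @ unc (coreF j X1 Y1)) =
        map (\<lambda>x. x + j) (coreR j X2 Y2) @ ([j, j] @ unc (coreF j X2 Y2))"
    using eq e1 e2 jeq unfolding j_def by simp
  then have mR: "map (\<lambda>x. x + j) (coreR j X1 Y1) = map (\<lambda>x. x + j) (coreR j X2 Y2)"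
    and uF: "unc (coreF j X1 Y1) = unc (coreF j X2 Y2)"
    using lR by (simp_all add: append_eq_append_conv)
  have Req: "coreR j X1 Y1 = coreR j X2 Y2"
  proof -
    have "map (\<lambda>x. x - j) (map (\<lambda>x. x + j) (coreR j X1 Y1)) = map (\<lambda>x. x - j) (map (\<lambda>x. x + j) (coreR j X2 Y2))"
      using mR by simp
    then show ?thesis by (simp add: comp_def)
  qed
  have Feq: "coreF j X1 Y1 = coreF j X2 Y2"
  proof (rule nth_equalityI)
    show l: "length (coreF j X1 Y1) = length (coreF j X2 Y2)" using CV1 CV2 jeq unfolding j_def by simp
    fix i assume i: "i < length (coreF j X1 Y1)"
    have "cnt (unc (coreF j X1 Y1)) (Suc i) = coreF j X1 Y1 ! i"
      using unc_cnt[of "coreF j X1 Y1" "Suc i"] CV1 i unfolding j_def by simp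
    moreover have "cnt (unc (coreF j X2 Y2)) (Suc i) = coreF j X2 Y2 ! i"
      using unc_cnt[of "coreF j X2 Y2" "Suc i"] CV2 i l jeq unfolding j_def by simp
    ultimately show "coreF j X1 Y1 ! i = coreF j X2 Y2 ! i" using uF by simp
  qed
  have gg1: "good j X1 Y1" using g1 unfolding j_def .
  have gg2: "good j X2 Y2" using g2 jd by simp
  have XY: "X1 = X2 \<and> Y1 = Y2" using core_inj[OF gg1 gg2 _ Req Feq] lX1 lX2 jeq by simp
  have Beq: "Bh1 = Bh2"
  proof (rule cnt_eq_imp_eq[OF sb1 sb2])
    show "\<forall>x\<in>set Bh1. 1 \<le> x" using b1 by auto
    show "\<forall>x\<in>set Bh2. 1 \<le> x" using b2 by auto
    fix k :: nat assume k: "1 \<le> k"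
    have c12: "cnt L 1 = cnt L 2" if "\<forall>x\<in>set L. 2 \<le> x" for L
      using that unfolding cnt_def by (metis (mono_tags, lifting) filter_True le_trans one_le_numeral)
    have mid: "cnt Bh1 k = cnt Bh2 k" if "2 \<le> k" "k \<le> j" for k
      using y1 y2 XY jd that unfolding j_def by (metis Suc_inject)
    show "cnt Bh1 k = cnt Bh2 k"
    proof (cases "k \<le> j")
      case True
      show ?thesis
      proof (cases "k = 1")
        case True
        have "cnt Bh1 1 = cnt Bh1 2" using c12 b1 by auto
        moreover have "cnt Bh2 1 = cnt Bh2 2" using c12 b2 by auto
        moreover have "cnt Bh1 2 = cnt Bh2 2" using mid jj1 unfolding j_def by simp
        ultimately show ?thesis using True by simp
      next
        case False
        then show ?thesis using mid k \<open>k \<le> j\<close> by simp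
      qed
    next
      case False
      then have "cnt Bh1 k = 0" "cnt Bh2 k = 0" using b1 b2 jd unfolding cnt_def j_def
        by (auto simp: filter_empty_conv)
      then show ?thesis by simp
    qed
  qed
  show ?thesis using x1 x2 XY Beq jd unfolding j_def by simp
qed

theorem lemma4p5:
  fixes m n :: nat
  assumes "n \<ge> 1"
  shows "\<exists>f. inj_on f (Q4 m n) \<and> f ` Q4 m n \<subseteq> P4 m n"
proof (intro exI conjI)
  show "inj_on (phi m) (Q4 m n)" by (rule inj_onI) (rule phi_inj)
  show "phi m ` Q4 m n \<subseteq> P4 m n" using phi_in by blast
qed


end
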